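(* Let $k\ge1$ and let $f:\mathbb{R}^{2k}\to\mathbb{R}^{2k}$ be analytic on all of $\mathbb{R}^{2k}$ (an entire function). If there is $M>0$ with $|f(x)|\le M$ for all $x\in\mathbb{R}^{2k}$ (Euclidean norm), then $f$ is constant.
   Context: Let $n=2k$ and let $\mathfrak g$ be the real $n\times n$ matrix with $\mathfrak g_{i,i+1}=1$ ($1\le i\le n-1$), $\mathfrak g_{n,1}=-1$, other entries $0$. For $u\in\mathbb{R}^n$ set $\varsigma(u)=\sum_{\ell=1}^n u_\ell\mathfrak g^{\ell-1}$ and $u\circledast v=\varsigma^{-1}(\varsigma(u)\varsigma(v))$. Let $\mathcal G_n=\{x:\det\varsigma(x)\ne0\}$ and $\delta^{-1}$ the $\circledast$-inverse of $\delta\in\mathcal G_n$. $f:\Omega\to\mathbb{R}^n$ is differentiable at $a$ if $f'(a)=\lim_{\delta\to0,\delta\in\mathcal G_n}(f(a+\delta)-f(a))\circledast\delta^{-1}$ exists; $f$ is analytic on $\Omega$ if it is differentiable at every point of $\Omega$ and all second order partial derivatives of its components are continuous on $\Omega$. *)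

theory Defs
  imports "HOL-Analysis.Analysis"
begin

text \<open>R^n is modelled as real^'n (Euclidean norm) together with a coordinate labelling
  idx :: nat => 'n, a bijection from {1..CARD('n)} onto the index type, so that the
  l-th coordinate of u is u $ idx l.\<close>

definition pos :: "(nat \<Rightarrow> 'n::finite) \<Rightarrow> 'n \<Rightarrow> nat" where
  "pos idx a = inv_into {1..CARD('n)} idx a"

definition gmat :: "(nat \<Rightarrow> 'n::finite) \<Rightarrow> real^'n^'n" where
  "gmat idx = (\<chi> a b. if pos idx b = pos idx a + 1 then 1
                     else if pos idx a = CARD('n) \<and> pos idx b = 1 then -1 else 0)"

fun mpow :: "real^'n^'n \<Rightarrow> nat \<Rightarrow> real^'n^'n" where
  "mpow A 0 = mat 1"
| "mpow A (Suc m) = A ** mpow A m"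

definition varsigma :: "(nat \<Rightarrow> 'n::finite) \<Rightarrow> real^'n \<Rightarrow> real^'n^'n" where
  "varsigma idx u = (\<Sum>l\<in>{1..CARD('n)}. (u $ idx l) *\<^sub>R mpow (gmat idx) (l - 1))"

definition cstar :: "(nat \<Rightarrow> 'n::finite) \<Rightarrow> real^'n \<Rightarrow> real^'n \<Rightarrow> real^'n" where
  "cstar idx u v = (THE w. varsigma idx w = varsigma idx u ** varsigma idx v)"

definition Gset :: "(nat \<Rightarrow> 'n::finite) \<Rightarrow> (real^'n) set" where
  "Gset idx = {x. det (varsigma idx x) \<noteq> 0}"

definition cunit :: "(nat \<Rightarrow> 'n::finite) \<Rightarrow> real^'n" where
  "cunit idx = (THE e. varsigma idx e = mat 1)"

definition cinv :: "(nat \<Rightarrow> 'n::finite) \<Rightarrow> real^'n \<Rightarrow> real^'n" where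
  "cinv idx d = (THE w. cstar idx d w = cunit idx)"

definition has_cderiv_at ::
  "(nat \<Rightarrow> 'n::finite) \<Rightarrow> (real^'n \<Rightarrow> real^'n) \<Rightarrow> real^'n \<Rightarrow> real^'n \<Rightarrow> bool" where
  "has_cderiv_at idx f D a \<longleftrightarrow>
     ((\<lambda>d. cstar idx (f (a + d) - f a) (cinv idx d)) \<longlongrightarrow> D) (at 0 within Gset idx)"

definition cdifferentiable_at ::
  "(nat \<Rightarrow> 'n::finite) \<Rightarrow> (real^'n \<Rightarrow> real^'n) \<Rightarrow> real^'n \<Rightarrow> bool" where
  "cdifferentiable_at idx f a \<longleftrightarrow> (\<exists>D. has_cderiv_at idx f D a)"

definition partial_exists :: "'n::finite \<Rightarrow> (real^'n \<Rightarrow> real) \<Rightarrow> real^'n \<Rightarrow> bool" where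
  "partial_exists i g x \<longleftrightarrow> (\<lambda>t. g (x + t *\<^sub>R axis i 1)) differentiable (at 0)"

definition partial :: "'n::finite \<Rightarrow> (real^'n \<Rightarrow> real) \<Rightarrow> real^'n \<Rightarrow> real" where
  "partial i g x = deriv (\<lambda>t. g (x + t *\<^sub>R axis i 1)) 0"

definition canalytic_on ::
  "(nat \<Rightarrow> 'n::finite) \<Rightarrow> (real^'n) set \<Rightarrow> (real^'n \<Rightarrow> real^'n) \<Rightarrow> bool" where
  "canalytic_on idx \<Omega> f \<longleftrightarrow>
     (\<forall>a\<in>\<Omega>. cdifferentiable_at idx f a) \<and>
     (\<forall>m i j. (\<forall>x\<in>\<Omega>. partial_exists i (\<lambda>y. f y $ m) x) \<and>
              (\<forall>x\<in>\<Omega>. partial_exists j (partial i (\<lambda>y. f y $ m)) x) \<and>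
              continuous_on \<Omega> (partial j (partial i (\<lambda>y. f y $ m))))"

end

theory Submission
  imports Defs "HOL-Complex_Analysis.Complex_Analysis"
begin


locale L =
  fixes idx :: "nat \<Rightarrow> 'n::finite"
  assumes bij: "bij_betw idx {1..CARD('n)} (UNIV::'n set)"
      and n2: "2 \<le> CARD('n)"
      and ev: "even CARD('n)"
begin

abbreviation "G \<equiv> gmat idx"
abbreviation "e l \<equiv> (axis (idx l) (1::real) :: real^'n)"

lemma inj_idx: "inj_on idx {1..CARD('n)}" using bij bij_betw_def by blast

lemma pos_idx[simp]: "l \<in> {1..CARD('n)} \<Longrightarrow> pos idx (idx l) = l"
  unfolding pos_def using inj_idx by (simp add: inv_into_f_f)

lemma idx_pos[simp]: "idx (pos idx a) = a"
  unfolding pos_def using bij by (simp add: bij_betw_def f_inv_into_f)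

lemma pos_range: "pos idx a \<in> {1..CARD('n)}"
  unfolding pos_def using bij by (metis bij_betw_def inv_into_into UNIV_I)

lemma pos_ge1[simp]: "1 \<le> pos idx a" and pos_leN[simp]: "pos idx a \<le> CARD('n)"
  using pos_range by auto

lemma pos_ge1'[simp]: "Suc 0 \<le> pos idx a" using pos_range by auto

lemma pos_ne0[simp]: "pos idx a \<noteq> 0" using pos_range by (metis atLeastAtMost_iff not_one_le_zero)

lemma if_mult1: "(if P then (1::'a::semiring_1) else 0) * x = (if P then x else 0)" by simp
lemma if_mult1': "x * (if P then (1::'a::semiring_1) else 0) = (if P then x else 0)" by simp

lemma of_real_if1: "complex_of_real (if P then 1 else 0) * x = (if P then x else 0)" by simp
lemma of_real_ifm1: "complex_of_real (if P then -1 else 0) * x = (if P then -x else 0)" by simp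

lemma pos_eq_iff: "l \<in> {1..CARD('n)} \<Longrightarrow> pos idx a = l \<longleftrightarrow> a = idx l"
  by (metis idx_pos pos_idx)

lemma row_prod: "(A ** B) $ i = (\<Sum>c\<in>UNIV. A $ i $ c *\<^sub>R B $ c)"
  by (simp add: vec_eq_iff matrix_matrix_mult_def sum_component)

lemma sum_ind: "(\<Sum>c\<in>UNIV. (if c = a then 1 else 0) *\<^sub>R (v c :: 'b::real_vector)) = v (a::'n)"
proof -
  have "(if c = a then 1 else 0) *\<^sub>R v c = (if c = a then v c else 0)" for c by simp
  then have "(\<Sum>c\<in>UNIV. (if c = a then 1 else 0) *\<^sub>R v c) = (\<Sum>c\<in>UNIV. if c = a then v c else 0)"
    by (intro sum.cong) auto
  also have "\<dots> = v a" by (subst sum.delta) auto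
  finally show ?thesis .
qed

lemma matrix_add_rdistrib': "((B + C) ** A) = (B ** A) + (C ** A)"
  by (vector matrix_matrix_mult_def sum.distrib[symmetric] field_simps)

lemma G_entry: assumes "1 \<le> l" "l < CARD('n)"
  shows "G $ idx l $ c = (if c = idx (Suc l) then 1 else 0)"
proof -
  have "pos idx (idx l) = l" using assms by simp
  moreover have "pos idx c = Suc l \<longleftrightarrow> c = idx (Suc l)" using assms pos_eq_iff[of "Suc l" c] by simp
  ultimately show ?thesis using assms unfolding gmat_def by simp
qed

lemma G_row: assumes "1 \<le> l" "l < CARD('n)"
  shows "(G ** X) $ idx l = X $ idx (Suc l)"
  using assms by (simp add: row_prod G_entry sum_ind)

lemma mpow_row: "1 \<le> l \<Longrightarrow> l + m \<le> CARD('n) \<Longrightarrow> mpow G m $ idx l = e (l + m)"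
proof (induction m arbitrary: l)
  case 0
  then show ?case by (auto simp: vec_eq_iff mat_def axis_def)
next
  case (Suc m)
  then have "mpow G (Suc m) $ idx l = mpow G m $ idx (Suc l)"
    by (simp add: G_row)
  also have "\<dots> = e (Suc l + m)" using Suc by simp
  finally show ?case by simp
qed

lemma mpow_comm: "G ** X = X ** G \<Longrightarrow> mpow G m ** X = X ** mpow G m"
proof (induction m)
  case 0 then show ?case by simp
next
  case (Suc m)
  have "mpow G (Suc m) ** X = G ** (mpow G m ** X)" by (simp add: matrix_mul_assoc)
  also have "\<dots> = (G ** X) ** mpow G m" using Suc by (simp add: matrix_mul_assoc)
  also have "\<dots> = X ** mpow G (Suc m)" using Suc by (simp add: matrix_mul_assoc)
  finally show ?case .
qed

lemma mpow_G_comm: "G ** mpow G m = mpow G m ** G"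
  using mpow_comm[of G m] by simp

lemma mpow_mpow_comm: "mpow G a ** mpow G b = mpow G b ** mpow G a"
  by (rule mpow_comm) (rule mpow_G_comm)

lemma sum_idx: "(\<Sum>l\<in>{1..CARD('n)}. h (idx l)) = (\<Sum>a\<in>UNIV. h a)"
  using sum.reindex[OF inj_idx, of h] bij by (simp add: bij_betw_def)

lemma row_via_first: assumes "l \<in> {1..CARD('n)}"
  shows "(mpow G (l - 1) ** X) $ idx 1 = X $ idx l"
proof -
  have "mpow G (l - 1) $ idx 1 = e l" using assms mpow_row[of 1 "l - 1"] by auto
  then show ?thesis
    by (simp add: row_prod axis_def sum_ind)
qed

lemma varsigma_row: assumes "l \<in> {1..CARD('n)}"
  shows "varsigma idx w $ idx l = (\<Sum>c\<in>UNIV. w $ c *\<^sub>R mpow G (l - 1) $ c)"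
proof -
  have "mpow G (m - 1) $ idx l = mpow G (l - 1) $ idx m" if m: "m \<in> {1..CARD('n)}" for m
  proof -
    have "mpow G (m - 1) $ idx l = (mpow G (l - 1) ** mpow G (m - 1)) $ idx 1"
      by (rule row_via_first[OF assms, symmetric])
    also have "\<dots> = (mpow G (m - 1) ** mpow G (l - 1)) $ idx 1" by (simp add: mpow_mpow_comm)
    also have "\<dots> = mpow G (l - 1) $ idx m" using row_via_first[OF m] by simp
    finally show ?thesis .
  qed
  then have "varsigma idx w $ idx l = (\<Sum>m\<in>{1..CARD('n)}. w $ idx m *\<^sub>R mpow G (l - 1) $ idx m)"
    unfolding varsigma_def by (simp add: sum_component)
  also have "\<dots> = (\<Sum>c\<in>UNIV. w $ c *\<^sub>R mpow G (l - 1) $ c)"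
    by (rule sum_idx)
  finally show ?thesis .
qed

lemma first_row_eq: assumes "G ** X = X ** G"
  shows "varsigma idx (X $ idx 1) = X"
proof -
  have "varsigma idx (X $ idx 1) $ a = X $ a" for a
  proof -
    define l where "l = pos idx a"
    have l: "l \<in> {1..CARD('n)}" "a = idx l" using pos_range by (auto simp: l_def)
    have "X $ idx l = (mpow G (l - 1) ** X) $ idx 1" by (rule row_via_first[OF l(1), symmetric])
    also have "\<dots> = (X ** mpow G (l - 1)) $ idx 1" using mpow_comm[OF assms] by simp
    also have "\<dots> = varsigma idx (X $ idx 1) $ idx l" by (simp add: row_prod varsigma_row[OF l(1)])
    finally show ?thesis using l by simp
  qed
  then show ?thesis by (simp add: vec_eq_iff)
qed

lemma varsigma_first: "varsigma idx w $ idx 1 = w"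
proof -
  have "varsigma idx w $ idx 1 = (\<Sum>c\<in>UNIV. w $ c *\<^sub>R mpow G 0 $ c)"
    using varsigma_row[of 1 w] n2 by simp
  also have "\<dots> = w"
    by (simp add: vec_eq_iff sum_component mat_def if_distrib cong: if_cong)
  finally show ?thesis .
qed

lemma matrix_sum_mul: "(\<Sum>i\<in>S. A i) ** B = (\<Sum>i\<in>S. A i ** B)"
  by (induction S rule: infinite_finite_induct) (auto simp: matrix_add_rdistrib')

lemma matrix_mul_sum: "B ** (\<Sum>i\<in>S. A i) = (\<Sum>i\<in>S. B ** A i)"
  by (induction S rule: infinite_finite_induct) (auto simp: matrix_add_ldistrib)

lemma varsigma_comm: "G ** varsigma idx w = varsigma idx w ** G"
  unfolding varsigma_def matrix_sum_mul matrix_mul_sum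
  by (intro sum.cong refl) (simp add: matrix_scalar_ac scalar_matrix_assoc[symmetric] mpow_G_comm)

lemma varsigma_inj: "varsigma idx u = varsigma idx v \<Longrightarrow> u = v"
  by (metis varsigma_first)

lemma varsigma_prod_comm: "G ** (varsigma idx u ** varsigma idx v) = (varsigma idx u ** varsigma idx v) ** G"
  by (metis matrix_mul_assoc varsigma_comm)

lemma varsigma_cstar: "varsigma idx (cstar idx u v) = varsigma idx u ** varsigma idx v"
proof -
  have "\<exists>!w. varsigma idx w = varsigma idx u ** varsigma idx v"
  proof (rule ex1I)
    show "varsigma idx ((varsigma idx u ** varsigma idx v) $ idx 1) = varsigma idx u ** varsigma idx v"
      by (rule first_row_eq[OF varsigma_prod_comm])
  next
    fix w assume "varsigma idx w = varsigma idx u ** varsigma idx v"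
    then show "w = (varsigma idx u ** varsigma idx v) $ idx 1" by (metis varsigma_first)
  qed
  then show ?thesis unfolding cstar_def by (rule theI')
qed

lemma varsigma_e1: "varsigma idx (e 1) = mat 1"
proof -
  have "(mat 1 :: real^'n^'n) $ idx 1 = e 1" by (simp add: vec_eq_iff mat_def axis_def)
  then show ?thesis using first_row_eq[of "mat 1"] by simp
qed

lemma cunit_eq: "cunit idx = e 1"
  unfolding cunit_def using varsigma_e1 varsigma_inj by (intro the_equality) auto

lemma Gset_iff: "x \<in> Gset idx \<longleftrightarrow> invertible (varsigma idx x)"
  by (simp add: Gset_def invertible_det_nz)

lemma cinv: assumes "d \<in> Gset idx"
  shows "varsigma idx d ** varsigma idx (cinv idx d) = mat 1" "cstar idx d (cinv idx d) = e 1"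
proof -
  define S where "S = varsigma idx d"
  obtain B where B: "S ** B = mat 1" "B ** S = mat 1"
    using assms unfolding Gset_iff S_def invertible_def by blast
  have "G ** B = (B ** S) ** G ** B" using B by simp
  also have "\<dots> = B ** (G ** S) ** B" unfolding S_def using varsigma_comm by (simp add: matrix_mul_assoc)
  also have "\<dots> = B ** G" using B by (simp add: matrix_mul_assoc[symmetric])
  finally have comm: "G ** B = B ** G" .
  define w0 where "w0 = B $ idx 1"
  have vw0: "varsigma idx w0 = B" unfolding w0_def by (rule first_row_eq[OF comm])
  have c0: "cstar idx d w0 = e 1"
    using varsigma_cstar[of d w0] vw0 B varsigma_e1 S_def varsigma_inj by metis
  have "cinv idx d = w0"
    unfolding cinv_def cunit_eq
  proof (rule the_equality)
    show "cstar idx d w0 = e 1" by (rule c0)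
  next
    fix w assume "cstar idx d w = e 1"
    then have "S ** varsigma idx w = mat 1" using varsigma_cstar[of d w] varsigma_e1 S_def by metis
    then have "varsigma idx w = B" using B by (metis matrix_mul_assoc matrix_mul_lid)
    then show "w = w0" using vw0 varsigma_inj by metis
  qed
  then show "varsigma idx d ** varsigma idx (cinv idx d) = mat 1" "cstar idx d (cinv idx d) = e 1"
    using vw0 B c0 S_def by auto
qed

lemma varsigma_add: "varsigma idx (u + v) = varsigma idx u + varsigma idx v"
  unfolding varsigma_def by (simp add: scaleR_add_left sum.distrib)

lemma varsigma_scaleR: "varsigma idx (c *\<^sub>R u) = c *\<^sub>R varsigma idx u"
  unfolding varsigma_def by (simp add: scaleR_sum_right)

lemma varsigma_diff: "varsigma idx (u - v) = varsigma idx u - varsigma idx v"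
  unfolding varsigma_def by (simp add: scaleR_diff_left sum_subtractf)

lemma Gset_scale: assumes "d \<in> Gset idx" "c \<noteq> 0" shows "c *\<^sub>R d \<in> Gset idx"
proof -
  obtain B where B: "varsigma idx d ** B = mat 1" "B ** varsigma idx d = mat 1"
    using assms unfolding Gset_iff invertible_def by blast
  have "(c *\<^sub>R varsigma idx d) ** ((1/c) *\<^sub>R B) = mat 1"
    using B assms by (simp add: matrix_scalar_ac scalar_matrix_assoc[symmetric])
  then show ?thesis unfolding Gset_iff varsigma_scaleR invertible_right_inverse by blast
qed

lemma e1_Gset: "e 1 \<in> Gset idx"
  unfolding Gset_iff varsigma_e1 invertible_def by (rule exI[of _ "mat 1"]) simp

lemma dominant_inj:
  fixes H :: "real^'n^'n"
  assumes c: "c > (\<Sum>a\<in>UNIV. \<Sum>b\<in>UNIV. \<bar>H $ a $ b\<bar>)"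
  shows "inj ((*v) (H + c *\<^sub>R mat 1))"
proof -
  have "x = 0" if x: "(H + c *\<^sub>R mat 1) *v x = 0" for x
  proof (rule ccontr)
    assume nz: "x \<noteq> 0"
    define m where "m = Max (range (\<lambda>b. \<bar>x $ b\<bar>))"
    have "m \<in> range (\<lambda>b. \<bar>x $ b\<bar>)" unfolding m_def by (rule Max_in) auto
    then obtain a where am: "\<bar>x $ a\<bar> = m" by auto
    have a: "\<And>b. \<bar>x $ b\<bar> \<le> \<bar>x $ a\<bar>" unfolding am m_def by (rule Max_ge) auto
    have xa: "\<bar>x $ a\<bar> > 0"
    proof -
      obtain b where "x $ b \<noteq> 0" using nz by (auto simp: vec_eq_iff)
      then show ?thesis using a[of b] by linarith
    qed
    have "((H + c *\<^sub>R mat 1) *v x) $ a = (\<Sum>b\<in>UNIV. H $ a $ b * x $ b) + c * x $ a"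
    proof -
      have "((H + c *\<^sub>R mat 1) *v x) $ a = (\<Sum>b\<in>UNIV. (H$a$b + (if a = b then c else 0)) * x$b)"
        by (simp add: matrix_vector_mult_def mat_def) (intro sum.cong, auto)
      also have "\<dots> = (\<Sum>b\<in>UNIV. H$a$b * x$b) + (\<Sum>b\<in>UNIV. if a = b then c * x$b else 0)"
        unfolding distrib_right sum.distrib by (intro arg_cong2[where f="(+)"] sum.cong) auto
      also have "\<dots> = (\<Sum>b\<in>UNIV. H $ a $ b * x $ b) + c * x $ a" by simp
      finally show ?thesis .
    qed
    then have eq: "c * x $ a = - (\<Sum>b\<in>UNIV. H $ a $ b * x $ b)" using x by simp
    have s0: "(\<Sum>a\<in>UNIV. \<Sum>b\<in>UNIV. \<bar>H $ a $ b\<bar>) \<ge> 0" by (intro sum_nonneg) auto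
    have c0: "c > 0" using c s0 by linarith
    have "c * \<bar>x $ a\<bar> = \<bar>c * x $ a\<bar>" using c0 by (simp add: abs_mult)
    also have "\<dots> = \<bar>\<Sum>b\<in>UNIV. H $ a $ b * x $ b\<bar>" unfolding eq by (rule abs_minus_cancel)
    also have "\<dots> \<le> (\<Sum>b\<in>UNIV. \<bar>H $ a $ b\<bar> * \<bar>x $ a\<bar>)"
      by (rule order_trans[OF sum_abs]) (auto intro!: sum_mono simp: abs_mult mult_left_mono a)
    also have "\<dots> = (\<Sum>b\<in>UNIV. \<bar>H $ a $ b\<bar>) * \<bar>x $ a\<bar>" by (simp add: sum_distrib_right)
    also have "\<dots> \<le> (\<Sum>a\<in>UNIV. \<Sum>b\<in>UNIV. \<bar>H $ a $ b\<bar>) * \<bar>x $ a\<bar>"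
      by (intro mult_right_mono member_le_sum) (auto intro: sum_nonneg)
    finally have "c * \<bar>x $ a\<bar> \<le> (\<Sum>a\<in>UNIV. \<Sum>b\<in>UNIV. \<bar>H $ a $ b\<bar>) * \<bar>x $ a\<bar>" .
    moreover have "(\<Sum>a\<in>UNIV. \<Sum>b\<in>UNIV. \<bar>H $ a $ b\<bar>) * \<bar>x $ a\<bar> < c * \<bar>x $ a\<bar>"
      using c xa by (rule mult_strict_right_mono)
    ultimately show False by linarith
  qed
  then show ?thesis
    by (metis (no_types, lifting) injI matrix_vector_mult_diff_distrib right_minus_eq)
qed

lemma shift_Gset: "\<exists>c. h + c *\<^sub>R e 1 \<in> Gset idx"
proof -
  define H where "H = varsigma idx h"
  define c where "c = (\<Sum>a\<in>UNIV. \<Sum>b\<in>UNIV. \<bar>H $ a $ b\<bar>) + 1"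
  have "inj ((*v) (H + c *\<^sub>R mat 1))" by (rule dominant_inj) (simp add: c_def)
  then have "det (H + c *\<^sub>R mat 1) \<noteq> 0"
    using det_nz_iff_inj[of "(*v) (H + c *\<^sub>R mat 1)"] by (simp add: matrix_of_matrix_vector_mul)
  then show ?thesis
    by (intro exI[of _ c]) (simp add: Gset_def varsigma_add varsigma_scaleR varsigma_e1 varsigma_e1[unfolded One_nat_def] H_def)
qed

definition phi :: "complex \<Rightarrow> real^'n \<Rightarrow> complex" where
  "phi w u = (\<Sum>a\<in>UNIV. complex_of_real (u $ a) * w ^ (pos idx a - 1))"

definition vw :: "complex \<Rightarrow> complex^'n" where
  "vw w = (\<chi> a. w ^ (pos idx a - 1))"

definition cmv :: "real^'n^'n \<Rightarrow> complex^'n \<Rightarrow> complex^'n" where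
  "cmv M v = (\<chi> a. \<Sum>b\<in>UNIV. complex_of_real (M $ a $ b) * v $ b)"

lemma cmv_mul: "cmv (A ** B) v = cmv A (cmv B v)"
proof -
  have "cmv (A ** B) v $ a = cmv A (cmv B v) $ a" for a
  proof -
    have "cmv (A ** B) v $ a = (\<Sum>b\<in>UNIV. \<Sum>c\<in>UNIV. complex_of_real (A$a$c) * (complex_of_real (B$c$b) * v$b))"
      unfolding cmv_def matrix_matrix_mult_def by (simp add: sum_distrib_right mult.assoc)
    also have "\<dots> = (\<Sum>c\<in>UNIV. \<Sum>b\<in>UNIV. complex_of_real (A$a$c) * (complex_of_real (B$c$b) * v$b))"
      by (rule sum.swap)
    also have "\<dots> = cmv A (cmv B v) $ a"
      unfolding cmv_def by (simp add: sum_distrib_left)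
    finally show ?thesis .
  qed
  then show ?thesis by (simp add: vec_eq_iff)
qed

lemma cmv_add: "cmv (A + B) v = cmv A v + cmv B v"
  unfolding cmv_def by (simp add: vec_eq_iff distrib_right sum.distrib)

lemma cmv_zero: "cmv 0 v = 0"
  unfolding cmv_def by (simp add: vec_eq_iff)

lemma cmv_scaleR: "cmv (c *\<^sub>R A) v = complex_of_real c *s cmv A v"
  unfolding cmv_def by (simp add: vec_eq_iff sum_distrib_left mult.assoc)

lemma cmv_sum: "cmv (\<Sum>i\<in>S. A i) v = (\<Sum>i\<in>S. cmv (A i) v)"
  by (induction S rule: infinite_finite_induct) (auto simp: cmv_add cmv_zero)

lemma cmv_smult: "cmv A (c *s v) = c *s cmv A v"
  unfolding cmv_def by (simp add: vec_eq_iff sum_distrib_left mult.left_commute)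

lemma G_last: "G $ idx CARD('n) $ c = (if c = idx 1 then -1 else 0)"
proof -
  have "pos idx (idx CARD('n)) = CARD('n)" using n2 by simp
  moreover have "pos idx c = 1 \<longleftrightarrow> c = idx 1" using n2 pos_eq_iff[of 1 c] by simp
  moreover have "pos idx c \<noteq> CARD('n) + 1" using pos_leN[of c] by linarith
  ultimately show ?thesis unfolding gmat_def by simp
qed

lemma cmv_G: assumes "w ^ CARD('n) = -1" shows "cmv G (vw w) = w *s vw w"
proof -
  have "cmv G (vw w) $ a = w * vw w $ a" for a
  proof -
    define l where "l = pos idx a"
    have l: "1 \<le> l" "l \<le> CARD('n)" "a = idx l" by (auto simp: l_def)
    show ?thesis
    proof (cases "l < CARD('n)")
      case True
      have "cmv G (vw w) $ a = (\<Sum>b\<in>UNIV. (if b = idx (Suc l) then w ^ (pos idx b - 1) else 0))"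
        unfolding cmv_def vw_def using l True by (simp add: G_entry of_real_if1)
      also have "\<dots> = w ^ l" using True by simp
      also have "\<dots> = w * vw w $ a" using l by (simp add: vw_def power_Suc[symmetric])
      finally show ?thesis .
    next
      case False
      then have la: "a = idx CARD('n)" using l by simp
      have "cmv G (vw w) $ a = (\<Sum>b\<in>UNIV. (if b = idx 1 then - (w ^ (pos idx b - 1)) else 0))"
        unfolding cmv_def vw_def la by (simp add: G_last of_real_ifm1)
      also have "\<dots> = -1" using n2 by simp
      also have "\<dots> = w ^ CARD('n)" using assms by simp
      also have "\<dots> = w * vw w $ a" using la n2
        by (simp add: vw_def power_Suc[symmetric])
      finally show ?thesis .
    qed
  qed
  then show ?thesis by (simp add: vec_eq_iff)
qed

lemma cmv_mpow: assumes "w ^ CARD('n) = -1" shows "cmv (mpow G m) (vw w) = w ^ m *s vw w"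
proof (induction m)
  case 0
  then show ?case by (simp add: cmv_def vec_eq_iff mat_def of_real_if1)
next
  case (Suc m)
  have "cmv (mpow G (Suc m)) (vw w) = cmv G (w ^ m *s vw w)" by (simp add: cmv_mul Suc)
  also have "\<dots> = w ^ m *s (w *s vw w)" by (simp add: cmv_smult cmv_G[OF assms])
  finally show ?case by (simp add: vec_eq_iff mult_ac)
qed

lemma phi_idx: "phi w u = (\<Sum>l\<in>{1..CARD('n)}. complex_of_real (u $ idx l) * w ^ (l - 1))"
  unfolding phi_def sum_idx[symmetric] by (intro sum.cong) auto

lemma cmv_varsigma: assumes "w ^ CARD('n) = -1" shows "cmv (varsigma idx u) (vw w) = phi w u *s vw w"
  unfolding varsigma_def cmv_sum cmv_scaleR cmv_mpow[OF assms] phi_idx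
  by (simp add: vec_eq_iff sum_distrib_right sum_component mult.assoc)

lemma vw_1: "vw w $ idx 1 = 1"
  using n2 by (simp add: vw_def)

lemma phi_row: "phi w (M $ idx 1) = cmv M (vw w) $ idx 1"
  unfolding phi_def cmv_def vw_def by simp

lemma phi_mult: assumes "w ^ CARD('n) = -1" shows "phi w (cstar idx u v) = phi w u * phi w v"
proof -
  have "phi w (cstar idx u v) = cmv (varsigma idx (cstar idx u v)) (vw w) $ idx 1"
    by (metis phi_row varsigma_first)
  also have "\<dots> = phi w u * phi w v"
    by (simp add: varsigma_cstar cmv_mul cmv_varsigma[OF assms] cmv_smult vw_1 vw_1[unfolded One_nat_def])
  finally show ?thesis .
qed

lemma phi_e: "l \<in> {1..CARD('n)} \<Longrightarrow> phi w (e l) = w ^ (l - 1)"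
  unfolding phi_def by (simp add: axis_def of_real_if1)

lemma phi_add: "phi w (u + v) = phi w u + phi w v"
  unfolding phi_def by (simp add: distrib_right sum.distrib)

lemma phi_scaleR: "phi w (c *\<^sub>R u) = complex_of_real c * phi w u"
  unfolding phi_def by (simp add: sum_distrib_left mult.assoc)

lemma phi_diff: "phi w (u - v) = phi w u - phi w v"
  unfolding phi_def by (simp add: left_diff_distrib sum_subtractf)

lemma linear_phi: "linear (phi w)"
proof (rule linearI)
  show "phi w (c *\<^sub>R u) = c *\<^sub>R phi w u" for c u
    unfolding phi_scaleR by (simp add: scaleR_conv_of_real)
qed (rule phi_add)

lemma bounded_linear_phi: "bounded_linear (phi w)"
  using linear_phi linear_conv_bounded_linear by blast

lemma sum_idx_Suc: "(\<Sum>a\<in>UNIV. F a) = (\<Sum>m<CARD('n). F (idx (Suc m)))"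
  using sum_idx[of F] sum.atLeast1_atMost_eq[of "\<lambda>l. F (idx l)" "CARD('n)"] by simp

lemma C1_deriv:
  fixes g :: "real^'n \<Rightarrow> real" and p :: "'n \<Rightarrow> real^'n \<Rightarrow> real"
  assumes pd: "\<And>x i. ((\<lambda>t. g (x + t *\<^sub>R axis i 1)) has_real_derivative p i x) (at 0)"
    and cont: "\<And>i. continuous_on UNIV (p i)"
  shows "(g has_derivative (\<lambda>h. \<Sum>i\<in>UNIV. p i x * h $ i)) (at x)"
proof -
  have bl: "bounded_linear (\<lambda>h. \<Sum>i\<in>UNIV. p i x * h $ i)"
    by (intro bounded_linear_sum) (rule bounded_linear_compose[OF bounded_linear_mult_right bounded_linear_vec_nth])
  show ?thesis unfolding has_derivative_at_alt
  proof (intro conjI allI impI bl)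
    fix e :: real assume e: "e > 0"
    define Nr where "Nr = real CARD('n)"
    have Nr: "Nr > 0" unfolding Nr_def by simp
    define \<epsilon> where "\<epsilon> = e / (3 * Nr)"
    have eps: "\<epsilon> > 0" unfolding \<epsilon>_def using e Nr by simp
    have "\<forall>\<^sub>F z in at x. \<forall>i. dist (p i z) (p i x) < \<epsilon>"
    proof (rule eventually_all_finite)
      fix i
      have "isCont (p i) x" using cont[of i] by (simp add: continuous_on_eq_continuous_at)
      then have "(p i \<longlongrightarrow> p i x) (at x)" by (simp add: isCont_def)
      then show "\<forall>\<^sub>F z in at x. dist (p i z) (p i x) < \<epsilon>" using eps by (rule tendstoD)
    qed
    then obtain d where d: "d > 0" "\<And>z i. z \<noteq> x \<Longrightarrow> dist z x < d \<Longrightarrow> dist (p i z) (p i x) < \<epsilon>"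
      unfolding eventually_at by blast
    have dd: "\<bar>p i z - p i x\<bar> < \<epsilon>" if "dist z x < d" for z i
      using d(2)[OF _ that, of i] eps by (cases "z = x") (auto simp: dist_real_def)
    show "\<exists>d>0. \<forall>y. norm (y - x) < d \<longrightarrow>
          norm (g y - g x - (\<Sum>i\<in>UNIV. p i x * (y - x) $ i)) \<le> e * norm (y - x)"
    proof (intro exI[of _ "d / Nr"] conjI allI impI)
      show "d / Nr > 0" using d Nr by simp
      fix y assume y: "norm (y - x) < d / Nr"
      define h where "h = y - x"
      define P where "P m = (\<chi> a. if pos idx a \<le> m then h $ a else 0)" for m
      have sumh: "(\<Sum>a\<in>UNIV. \<bar>h $ a\<bar>) \<le> Nr * norm h"
      proof -
        have "(\<Sum>a\<in>UNIV. \<bar>h $ a\<bar>) \<le> (\<Sum>a\<in>(UNIV::'n set). norm h)"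
          by (intro sum_mono component_le_norm_cart)
        then show ?thesis by (simp add: Nr_def)
      qed
      have hd: "Nr * norm h < d" using y Nr unfolding h_def by (simp add: field_simps)
      have normP: "dist (x + (P m + t *\<^sub>R axis (idx (Suc m)) 1)) x < d"
        if "m < CARD('n)" "\<bar>t\<bar> \<le> \<bar>h $ idx (Suc m)\<bar>" for m t
      proof -
        have "\<bar>(P m + t *\<^sub>R axis (idx (Suc m)) 1) $ a\<bar> \<le> \<bar>h $ a\<bar>" for a
        proof (cases "a = idx (Suc m)")
          case True
          then have "pos idx a = Suc m" using that by simp
          then show ?thesis using True that by (simp add: P_def axis_def)
        qed (auto simp: P_def axis_def)
        then have "norm (P m + t *\<^sub>R axis (idx (Suc m)) 1) \<le> (\<Sum>a\<in>UNIV. \<bar>h $ a\<bar>)"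
          by (rule order_trans[OF norm_le_l1_cart sum_mono])
        then show ?thesis using sumh hd by (simp add: dist_norm)
      qed
      have P0: "P 0 = 0" by (simp add: P_def vec_eq_iff)
      have PN: "P CARD('n) = h" by (simp add: P_def vec_eq_iff)
      have PS: "P (Suc m) = P m + h $ idx (Suc m) *\<^sub>R axis (idx (Suc m)) 1" if "m < CARD('n)" for m
      proof -
        have "pos idx a \<le> Suc m \<longleftrightarrow> pos idx a \<le> m \<or> a = idx (Suc m)" for a
          using that pos_eq_iff[of "Suc m" a] by auto
        then show ?thesis using that by (auto simp: P_def vec_eq_iff axis_def)
      qed
      have step: "\<bar>g (x + P (Suc m)) - g (x + P m) - p (idx (Suc m)) x * h $ idx (Suc m)\<bar>
                   \<le> 3 * \<epsilon> * \<bar>h $ idx (Suc m)\<bar>" if m: "m < CARD('n)" for m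
      proof -
        define i where "i = idx (Suc m)"
        define s where "s = h $ i"
        define y' where "y' = x + P m"
        define \<phi> where "\<phi> t = g (y' + t *\<^sub>R axis i 1)" for t
        have der: "(\<phi> has_vector_derivative p i (y' + t *\<^sub>R axis i 1)) (at t within closed_segment 0 s)" for t
        proof -
          have "((\<lambda>\<tau>. g ((y' + t *\<^sub>R axis i 1) + \<tau> *\<^sub>R axis i 1)) has_real_derivative p i (y' + t *\<^sub>R axis i 1)) (at 0)"
            by (rule pd)
          then have "((\<lambda>\<tau>. \<phi> (\<tau> + t)) has_real_derivative p i (y' + t *\<^sub>R axis i 1)) (at 0)"
            by (simp add: \<phi>_def algebra_simps scaleR_add_left)
          then have "(\<phi> has_real_derivative p i (y' + t *\<^sub>R axis i 1)) (at t)"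
            using DERIV_shift[of \<phi> _ 0 t] by simp
          then show ?thesis
            by (simp add: has_real_derivative_iff_has_vector_derivative has_vector_derivative_at_within)
        qed
        have close: "\<bar>p i (y' + t *\<^sub>R axis i 1) - p i x\<bar> < \<epsilon>" if "t \<in> closed_segment 0 s" for t
        proof -
          have "\<bar>t\<bar> \<le> \<bar>s\<bar>" using that by (auto simp: closed_segment_eq_real_ivl split: if_splits)
          then show ?thesis using normP[OF m, of t] dd unfolding y'_def i_def s_def
            by (simp add: add.assoc)
        qed
        have "norm (\<phi> s - \<phi> 0 - (s - 0) *\<^sub>R p i (y' + 0 *\<^sub>R axis i 1)) \<le> norm (s - 0) * (2 * \<epsilon>)"
        proof (rule vector_differentiable_bound_linearization[where S="closed_segment 0 s" and
              f'="\<lambda>t. p i (y' + t *\<^sub>R axis i 1)" and ?x0.0=0 and B="2 * \<epsilon>" and f=\<phi>])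
          show "(\<phi> has_vector_derivative p i (y' + t *\<^sub>R axis i 1)) (at t within closed_segment 0 s)"
            if "t \<in> closed_segment 0 s" for t
            by (rule der)
          show "norm (p i (y' + t *\<^sub>R axis i 1) - p i (y' + 0 *\<^sub>R axis i 1)) \<le> 2 * \<epsilon>"
            if "t \<in> closed_segment 0 s" for t
            using close[OF that] close[of 0] by (simp add: abs_le_iff) linarith
        qed auto
        then have A: "\<bar>\<phi> s - \<phi> 0 - s * p i y'\<bar> \<le> \<bar>s\<bar> * (2 * \<epsilon>)" by simp
        have B: "\<bar>s * p i y' - s * p i x\<bar> \<le> \<bar>s\<bar> * \<epsilon>"
        proof -
          have "\<bar>p i y' - p i x\<bar> \<le> \<epsilon>" using close[of 0] by simp
          then have "\<bar>s\<bar> * \<bar>p i y' - p i x\<bar> \<le> \<bar>s\<bar> * \<epsilon>" by (rule mult_left_mono) simp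
          then show ?thesis by (simp add: abs_mult right_diff_distrib[symmetric])
        qed
        have "\<phi> s = g (x + P (Suc m))" "\<phi> 0 = g (x + P m)"
          using PS[OF m] by (simp_all add: \<phi>_def y'_def s_def i_def add.assoc)
        moreover have "\<bar>s\<bar> * (2 * \<epsilon>) + \<bar>s\<bar> * \<epsilon> = 3 * \<epsilon> * \<bar>s\<bar>" by (simp add: algebra_simps)
        ultimately have "\<bar>g (x + P (Suc m)) - g (x + P m) - p i x * s\<bar> \<le> 3 * \<epsilon> * \<bar>s\<bar>"
          using A B by (smt (verit) mult.commute)
        then show ?thesis unfolding i_def s_def .
      qed
      have tel: "g y - g x = (\<Sum>m<CARD('n). g (x + P (Suc m)) - g (x + P m))"
        by (subst sum_lessThan_telescope) (simp add: P0 PN h_def)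
      have lin: "(\<Sum>i\<in>UNIV. p i x * h $ i) = (\<Sum>m<CARD('n). p (idx (Suc m)) x * h $ idx (Suc m))"
        by (rule sum_idx_Suc)
      have "\<bar>g y - g x - (\<Sum>i\<in>UNIV. p i x * h $ i)\<bar>
          = \<bar>\<Sum>m<CARD('n). g (x + P (Suc m)) - g (x + P m) - p (idx (Suc m)) x * h $ idx (Suc m)\<bar>"
        unfolding tel lin by (simp add: sum_subtractf)
      also have "\<dots> \<le> (\<Sum>m<CARD('n). 3 * \<epsilon> * \<bar>h $ idx (Suc m)\<bar>)"
        by (rule order_trans[OF sum_abs]) (intro sum_mono step, simp)
      also have "\<dots> = 3 * \<epsilon> * (\<Sum>a\<in>UNIV. \<bar>h $ a\<bar>)"
        by (simp add: sum_idx_Suc[of "\<lambda>a. \<bar>h $ a\<bar>"] sum_distrib_left)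
      also have "\<dots> \<le> 3 * \<epsilon> * (Nr * norm h)"
        using sumh eps by (intro mult_left_mono) auto
      also have "\<dots> = e * norm h" unfolding \<epsilon>_def using Nr by (simp add: field_simps)
      finally show "norm (g y - g x - (\<Sum>i\<in>UNIV. p i x * (y - x) $ i)) \<le> e * norm (y - x)"
        by (simp add: h_def)
    qed
  qed

qed

lemma partial_deriv:
  assumes "partial_exists i g x"
  shows "((\<lambda>t. g (x + t *\<^sub>R axis i 1)) has_real_derivative partial i g x) (at 0)"
  using assms unfolding partial_exists_def partial_def
  by (simp add: DERIV_deriv_iff_real_differentiable)

lemma C1_from_partials:
  fixes g :: "real^'n \<Rightarrow> real"
  assumes ex: "\<And>x i. partial_exists i g x" and cont: "\<And>i. continuous_on UNIV (partial i g)"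
  shows "(g has_derivative (\<lambda>h. \<Sum>i\<in>UNIV. partial i g x * h $ i)) (at x)"
  by (rule C1_deriv[OF partial_deriv[OF ex] cont])

lemma f_deriv:
  assumes an: "canalytic_on idx UNIV f"
  shows "(f has_derivative (\<lambda>h. \<chi> m. \<Sum>i\<in>UNIV. partial i (\<lambda>y. f y $ m) x * h $ i)) (at x)"
proof -
  have all: "\<forall>m i j. (\<forall>x\<in>UNIV. partial_exists i (\<lambda>y. f y $ m) x) \<and>
              (\<forall>x\<in>UNIV. partial_exists j (partial i (\<lambda>y. f y $ m)) x) \<and>
              continuous_on UNIV (partial j (partial i (\<lambda>y. f y $ m)))"
    using an unfolding canalytic_on_def by (rule conjunct2)
  have A1: "partial_exists i (\<lambda>y. f y $ m) z" for m i z
    using all[THEN spec[of _ m], THEN spec[of _ i], THEN spec[of _ i]] by simp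
  have A2: "partial_exists j (partial i (\<lambda>y. f y $ m)) z" for m i j z
    using all[THEN spec[of _ m], THEN spec[of _ i], THEN spec[of _ j]] by simp
  have A3: "continuous_on UNIV (partial j (partial i (\<lambda>y. f y $ m)))" for m i j
    using all[THEN spec[of _ m], THEN spec[of _ i], THEN spec[of _ j]] by simp
  have comp: "((\<lambda>y. f y $ m) has_derivative (\<lambda>h. \<Sum>i\<in>UNIV. partial i (\<lambda>y. f y $ m) x * h $ i)) (at x)" for m
  proof (rule C1_from_partials)
    show "partial_exists i (\<lambda>y. f y $ m) z" for i z by (rule A1)
    show "continuous_on UNIV (partial i (\<lambda>y. f y $ m))" for i
    proof -
      have "((partial i (\<lambda>y. f y $ m)) has_derivative (\<lambda>h. \<Sum>j\<in>UNIV. partial j (partial i (\<lambda>y. f y $ m)) z * h $ j)) (at z)" for z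
        by (rule C1_from_partials[OF A2 A3])
      then show ?thesis
        by (meson continuous_at_imp_continuous_on has_derivative_continuous)
    qed
  qed
  show ?thesis
  proof (rule iffD2[OF has_derivative_componentwise_within[where S=UNIV]], rule ballI)
    fix b :: "real^'n" assume "b \<in> Basis"
    then obtain m where b: "b = axis m 1" using axis_inverse by blast
    have e1: "(\<lambda>x. f x \<bullet> b) = (\<lambda>x. f x $ m)" unfolding b inner_axis by simp
    have e2: "(\<lambda>h. (\<chi> m. \<Sum>i\<in>UNIV. partial i (\<lambda>y. f y $ m) x * h $ i) \<bullet> b)
            = (\<lambda>h. \<Sum>i\<in>UNIV. partial i (\<lambda>y. f y $ m) x * h $ i)" unfolding b inner_axis by simp
    show "((\<lambda>x. f x \<bullet> b) has_derivative (\<lambda>h. (\<chi> m. \<Sum>i\<in>UNIV. partial i (\<lambda>y. f y $ m) x * h $ i) \<bullet> b)) (at x)"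
      unfolding e1 e2 by (rule comp)
  qed
qed

lemma zero_notin_Gset: "0 \<notin> Gset idx"
proof
  assume "0 \<in> Gset idx"
  then obtain B where "varsigma idx 0 ** B = mat 1" unfolding Gset_iff invertible_def by blast
  moreover have "varsigma idx 0 = 0" using varsigma_scaleR[of 0 0] by simp
  ultimately have "(0::real^'n^'n) = mat 1" by simp
  then have "(0::real^'n^'n) $ idx 1 $ idx 1 = mat 1 $ idx 1 $ idx 1" by simp
  then show False by (simp add: mat_def)
qed

lemma ev_ne: "(\<And>t. t \<noteq> 0 \<Longrightarrow> P t) \<Longrightarrow> eventually P (at (0::real))"
  by (auto simp: eventually_at intro!: exI[of _ 1])

lemma diffquot:
  fixes f :: "real^'n \<Rightarrow> real^'n"
  assumes fd: "(f has_derivative Lf) (at a)" and h: "h \<noteq> 0"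
  shows "((\<lambda>t. (1/t) *\<^sub>R (f (a + t *\<^sub>R h) - f a)) \<longlongrightarrow> Lf h) (at 0)"
proof -
  have bl: "bounded_linear Lf" and lim: "((\<lambda>d. norm (f (a + d) - f a - Lf d) / norm d) \<longlongrightarrow> 0) (at 0)"
    using fd unfolding has_derivative_at by auto
  have fl: "filterlim (\<lambda>t::real. t *\<^sub>R h) (at 0) (at 0)"
    unfolding filterlim_at
  proof
    show "\<forall>\<^sub>F t in at 0. t *\<^sub>R h \<in> UNIV \<and> t *\<^sub>R h \<noteq> 0"
      using h by (auto simp: eventually_at intro!: exI[of _ 1])
    have "((\<lambda>t::real. t *\<^sub>R h) \<longlongrightarrow> 0 *\<^sub>R h) (at 0)" by (intro tendsto_intros)
    then show "((\<lambda>t::real. t *\<^sub>R h) \<longlongrightarrow> 0) (at 0)" by simp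
  qed
  have E: "((\<lambda>t. norm (f (a + t *\<^sub>R h) - f a - Lf (t *\<^sub>R h)) / norm (t *\<^sub>R h)) \<longlongrightarrow> 0) (at 0)"
    using filterlim_compose[OF lim fl] by simp
  have E2: "((\<lambda>t. norm (f (a + t *\<^sub>R h) - f a - Lf (t *\<^sub>R h)) / norm (t *\<^sub>R h) * norm h) \<longlongrightarrow> 0) (at 0)"
    by (rule tendsto_mult_left_zero[OF E])
  have ev: "\<forall>\<^sub>F t in at (0::real). norm ((1/t) *\<^sub>R (f (a + t *\<^sub>R h) - f a) - Lf h)
           = norm (f (a + t *\<^sub>R h) - f a - Lf (t *\<^sub>R h)) / norm (t *\<^sub>R h) * norm h"
  proof (rule ev_ne)
    fix t :: real assume t: "t \<noteq> 0"
    have "(1/t) *\<^sub>R (f (a + t *\<^sub>R h) - f a) - Lf h = (1/t) *\<^sub>R (f (a + t *\<^sub>R h) - f a - Lf (t *\<^sub>R h))"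
      using t by (simp add: linear_scale[OF bounded_linear.linear[OF bl]] scaleR_diff_right)
    show "norm ((1/t) *\<^sub>R (f (a + t *\<^sub>R h) - f a) - Lf h)
           = norm (f (a + t *\<^sub>R h) - f a - Lf (t *\<^sub>R h)) / norm (t *\<^sub>R h) * norm h"
    proof -
      have "norm ((1/t) *\<^sub>R (f (a + t *\<^sub>R h) - f a - Lf (t *\<^sub>R h)))
            = norm (f (a + t *\<^sub>R h) - f a - Lf (t *\<^sub>R h)) / \<bar>t\<bar>"
        by (simp only: norm_scaleR) (simp add: divide_inverse mult.commute)
      moreover have "norm (t *\<^sub>R h) = \<bar>t\<bar> * norm h" by simp
      ultimately show ?thesis using t h \<open>(1/t) *\<^sub>R (f (a + t *\<^sub>R h) - f a) - Lf h = _\<close>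
        by (simp add: field_simps)
    qed
  qed
  have "((\<lambda>t. norm ((1/t) *\<^sub>R (f (a + t *\<^sub>R h) - f a) - Lf h)) \<longlongrightarrow> 0) (at 0)"
    using tendsto_cong[OF ev] E2 by simp
  then show ?thesis
    unfolding tendsto_norm_zero_iff LIM_zero_iff .
qed

lemma phi_inv: assumes w: "w ^ CARD('n) = -1" and d: "d \<in> Gset idx"
  shows "phi w d * phi w (cinv idx d) = 1"
  using phi_mult[OF w, of d "cinv idx d"] cinv(2)[OF d] phi_e[of 1 w] n2 by simp

lemma deriv_phi_G:
  fixes f :: "real^'n \<Rightarrow> real^'n"
  assumes w: "w ^ CARD('n) = -1" and fd: "(f has_derivative Lf) (at a)"
    and cd: "has_cderiv_at idx f D a" and hG: "h \<in> Gset idx"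
  shows "phi w (Lf h) = phi w D * phi w h"
proof -
  have h0: "h \<noteq> 0" using hG zero_notin_Gset by blast
  define q where "q d = cstar idx (f (a + d) - f a) (cinv idx d)" for d
  have cl: "(q \<longlongrightarrow> D) (at 0 within Gset idx)" using cd unfolding has_cderiv_at_def q_def .
  have fl: "filterlim (\<lambda>t::real. t *\<^sub>R h) (at 0 within Gset idx) (at 0)"
    unfolding filterlim_at
  proof
    show "\<forall>\<^sub>F t in at 0. t *\<^sub>R h \<in> Gset idx \<and> t *\<^sub>R h \<noteq> 0"
      using h0 Gset_scale[OF hG] by (auto simp: eventually_at intro!: exI[of _ 1])
    have "((\<lambda>t::real. t *\<^sub>R h) \<longlongrightarrow> 0 *\<^sub>R h) (at 0)" by (intro tendsto_intros)
    then show "((\<lambda>t::real. t *\<^sub>R h) \<longlongrightarrow> 0) (at 0)" by simp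
  qed
  have l1: "((\<lambda>t. phi w (q (t *\<^sub>R h)) * phi w h) \<longlongrightarrow> phi w D * phi w h) (at 0)"
    using bounded_linear.tendsto[OF bounded_linear_phi filterlim_compose[OF cl fl]]
    by (intro tendsto_mult_right) simp
  have l2: "((\<lambda>t. phi w ((1/t) *\<^sub>R (f (a + t *\<^sub>R h) - f a))) \<longlongrightarrow> phi w (Lf h)) (at 0)"
    by (rule bounded_linear.tendsto[OF bounded_linear_phi diffquot[OF fd h0]])
  have ev: "\<forall>\<^sub>F t in at (0::real). phi w ((1/t) *\<^sub>R (f (a + t *\<^sub>R h) - f a)) = phi w (q (t *\<^sub>R h)) * phi w h"
  proof (rule ev_ne)
    fix t :: real assume t: "t \<noteq> 0"
    define d where "d = t *\<^sub>R h"
    have dG: "d \<in> Gset idx" unfolding d_def using Gset_scale[OF hG t] .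
    have pd: "phi w d = complex_of_real t * phi w h" unfolding d_def by (rule phi_scaleR)
    have "phi w (q d) * phi w h = phi w (f (a + d) - f a) * phi w (cinv idx d) * phi w h"
      unfolding q_def by (simp add: phi_mult[OF w])
    also have "\<dots> = phi w (f (a + d) - f a) * (phi w d * phi w (cinv idx d)) / complex_of_real t"
      using t by (simp add: pd field_simps)
    also have "\<dots> = phi w ((1/t) *\<^sub>R (f (a + d) - f a))"
      using phi_inv[OF w dG] by (simp only: phi_scaleR) (simp add: field_simps)
    finally show "phi w ((1/t) *\<^sub>R (f (a + t *\<^sub>R h) - f a)) = phi w (q (t *\<^sub>R h)) * phi w h"
      by (simp add: d_def)
  qed
  have l3: "((\<lambda>t. phi w ((1/t) *\<^sub>R (f (a + t *\<^sub>R h) - f a))) \<longlongrightarrow> phi w D * phi w h) (at 0)"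
    using tendsto_cong[OF ev] l1 by simp
  show ?thesis using tendsto_unique[OF _ l2 l3] by simp
qed

lemma deriv_phi:
  fixes f :: "real^'n \<Rightarrow> real^'n"
  assumes w: "w ^ CARD('n) = -1" and fd: "(f has_derivative Lf) (at a)"
    and cd: "has_cderiv_at idx f D a"
  shows "phi w (Lf h) = phi w D * phi w h"
proof -
  have lin: "linear Lf" using fd by (simp add: has_derivative_linear)
  obtain c where c: "h + c *\<^sub>R e 1 \<in> Gset idx" using shift_Gset by blast
  show ?thesis
  proof (cases "c = 0")
    case True
    then show ?thesis using deriv_phi_G[OF w fd cd, of h] c by simp
  next
    case False
    have c2: "c *\<^sub>R e 1 \<in> Gset idx" using Gset_scale[OF e1_Gset False] .
    have "Lf h = Lf (h + c *\<^sub>R e 1) - Lf (c *\<^sub>R e 1)" using linear_add[OF lin] by simp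
    then have "phi w (Lf h) = phi w (Lf (h + c *\<^sub>R e 1)) - phi w (Lf (c *\<^sub>R e 1))" by (simp add: phi_diff)
    also have "\<dots> = phi w D * (phi w (h + c *\<^sub>R e 1) - phi w (c *\<^sub>R e 1))"
      using deriv_phi_G[OF w fd cd c] deriv_phi_G[OF w fd cd c2] by (simp add: right_diff_distrib)
    also have "\<dots> = phi w D * phi w h" by (simp add: phi_add)
    finally show ?thesis .
  qed
qed

end



context L begin

lemma norm_w: fixes w :: complex assumes w: "w ^ CARD('n) = -1" shows "norm w = 1"
proof -
  have "norm (w ^ CARD('n)) = 1" using w by simp
  then have "norm w ^ CARD('n) = 1" by (metis norm_power)
  then show ?thesis using power_eq_1_iff[of "norm w" "CARD('n)"] n2 by auto
qed

lemma Im_w: assumes w: "w ^ CARD('n) = -1" shows "Im w \<noteq> 0"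
proof
  assume "Im w = 0"
  then have "w = complex_of_real (Re w)" by (simp add: complex_eq_iff)
  then have "complex_of_real (Re w ^ CARD('n)) = -1" using w by (metis of_real_power)
  then have "Re w ^ CARD('n) = -1" by (metis of_real_eq_iff of_real_minus of_real_1)
  moreover have "0 \<le> Re w ^ CARD('n)" using ev by (rule zero_le_even_power)
  ultimately show False by simp
qed

lemma phi_bound: assumes w: "w ^ CARD('n) = -1" shows "norm (phi w u) \<le> real CARD('n) * norm u"
proof -
  have "norm (phi w u) \<le> (\<Sum>a\<in>UNIV. norm (complex_of_real (u $ a) * w ^ (pos idx a - 1)))"
    unfolding phi_def by (rule norm_sum)
  also have "\<dots> = (\<Sum>a\<in>UNIV. \<bar>u $ a\<bar>)" by (simp add: norm_mult norm_power norm_w[OF w])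
  also have "\<dots> \<le> (\<Sum>a\<in>(UNIV::'n set). norm u)" by (intro sum_mono component_le_norm_cart)
  finally show ?thesis by simp
qed

lemma const_phi:
  fixes f :: "real^'n \<Rightarrow> real^'n"
  assumes w: "w ^ CARD('n) = -1" and fd: "\<And>x. (f has_derivative Lf x) (at x)"
    and cd: "\<And>x. has_cderiv_at idx f (D x) x" and bnd: "\<And>x. norm (f x) \<le> M"
  shows "phi w (f y) = phi w (f x0)"
proof -
  define F where "F x = phi w (f x)" for x
  have dF: "(F has_derivative (\<lambda>h. phi w (D x) * phi w h)) (at x)" for x
  proof -
    have "(F has_derivative (\<lambda>h. phi w (Lf x h))) (at x)"
      unfolding F_def by (rule bounded_linear.has_derivative[OF bounded_linear_phi fd])
    moreover have "(\<lambda>h. phi w (Lf x h)) = (\<lambda>h. phi w (D x) * phi w h)"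
      using deriv_phi[OF w fd cd] by auto
    ultimately show ?thesis by simp
  qed
  have iw: "Im w \<noteq> 0" by (rule Im_w[OF w])
  define \<psi> where "\<psi> z = (Re z - Im z * Re w / Im w) *\<^sub>R e 1 + (Im z / Im w) *\<^sub>R e 2" for z
  have pe2: "phi w (e 2) = w" using phi_e[of 2 w] n2 by simp
  have pe1: "phi w (e 1) = 1" using phi_e[of 1 w] n2 by simp
  have phipsi: "phi w (\<psi> z) = z" for z
  proof -
    have "phi w (\<psi> z) = complex_of_real (Re z - Im z * Re w / Im w) + complex_of_real (Im z / Im w) * w"
      unfolding \<psi>_def by (simp add: phi_add phi_scaleR pe1 pe2 pe1[unfolded One_nat_def])
    also have "\<dots> = z" using iw by (simp add: complex_eq_iff field_simps)
    finally show ?thesis .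
  qed
  have lpsi: "linear \<psi>"
    by (rule linearI) (simp_all add: \<psi>_def algebra_simps scaleR_add_left diff_divide_distrib add_divide_distrib)
  have blpsi: "bounded_linear \<psi>" using lpsi linear_conv_bounded_linear by blast
  define g where "g z = F (x0 + \<psi> z)" for z
  have gder: "(g has_field_derivative phi w (D (x0 + \<psi> z))) (at z)" for z
  proof -
    have "((\<lambda>z. x0 + \<psi> z) has_derivative \<psi>) (at z)"
      using blpsi by (auto intro!: derivative_eq_intros bounded_linear.has_derivative[OF blpsi] has_derivative_ident)
    from has_derivative_compose[OF this dF]
    have "(g has_derivative (\<lambda>u. phi w (D (x0 + \<psi> z)) * phi w (\<psi> u))) (at z)"
      unfolding g_def by (simp add: o_def)
    then show ?thesis unfolding has_field_derivative_def phipsi .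
  qed
  have hol: "g holomorphic_on UNIV"
    unfolding holomorphic_on_def field_differentiable_def using gder
    by (metis has_field_derivative_at_within)
  have bdd: "bounded (range g)"
    unfolding bounded_iff
  proof (intro exI ballI)
    fix v assume "v \<in> range g"
    then obtain z where "v = g z" by auto
    then show "norm v \<le> real CARD('n) * M"
      using phi_bound[OF w, of "f (x0 + \<psi> z)"] bnd[of "x0 + \<psi> z"]
      by (simp add: g_def F_def) (meson mult_left_mono of_nat_0_le_iff order_trans)
  qed
  have gc: "g z = g 0" for z
    using Liouville_theorem[OF hol bdd] unfolding constant_on_def by (metis UNIV_I)
  have psi0: "\<psi> 0 = 0" using linear_0[OF lpsi] .
  define z0 where "z0 = phi w (y - x0)"
  define p where "p = x0 + \<psi> z0"
  define d where "d = y - p"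
  have pd: "phi w d = 0" unfolding d_def p_def by (simp add: phi_diff phi_add phipsi z0_def)
  define r where "r t = F (p + t *\<^sub>R d)" for t :: real
  have "((\<lambda>t. F (p + t *\<^sub>R d)) has_derivative (\<lambda>s. 0)) (at t within UNIV)" for t
  proof -
    have "((\<lambda>t::real. p + t *\<^sub>R d) has_derivative (\<lambda>s. s *\<^sub>R d)) (at t)"
      by (auto intro!: derivative_eq_intros)
    from has_derivative_compose[OF this dF]
    have "((\<lambda>t. F (p + t *\<^sub>R d)) has_derivative (\<lambda>s. phi w (D (p + t *\<^sub>R d)) * phi w (s *\<^sub>R d))) (at t)"
      by (simp add: o_def)
    moreover have "(\<lambda>s. phi w (D (p + t *\<^sub>R d)) * phi w (s *\<^sub>R d)) = (\<lambda>s. 0)"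
      by (auto simp: phi_scaleR pd)
    ultimately show ?thesis by simp
  qed
  then obtain c where "\<forall>t\<in>UNIV. F (p + t *\<^sub>R d) = c"
    using has_derivative_zero_constant[of UNIV "\<lambda>t. F (p + t *\<^sub>R d)"] by auto
  then have "F (p + 1 *\<^sub>R d) = F (p + 0 *\<^sub>R d)" by (metis UNIV_I)
  then have "F y = F p" by (simp add: d_def)
  also have "F p = g z0" by (simp add: g_def p_def)
  also have "\<dots> = g 0" by (rule gc)
  also have "\<dots> = F x0" by (simp add: g_def psi0)
  finally show ?thesis by (simp add: F_def)
qed

lemma phi_poly: "phi w u = (\<Sum>i\<le>CARD('n) - 1. complex_of_real (u $ idx (Suc i)) * w ^ i)"
proof -
  have "phi w u = (\<Sum>i<CARD('n). complex_of_real (u $ idx (Suc i)) * w ^ i)"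
    unfolding phi_idx using sum.atLeast1_atMost_eq[of "\<lambda>l. complex_of_real (u $ idx l) * w ^ (l - 1)" "CARD('n)"]
    by simp
  also have "{..<CARD('n)} = {..CARD('n) - 1}" using n2 by auto
  finally show ?thesis .
qed

lemma phi_all_zero:
  assumes z: "\<And>w. w ^ CARD('n) = -1 \<Longrightarrow> phi w u = 0"
  shows "u = 0"
proof (rule ccontr)
  assume "u \<noteq> 0"
  then obtain a where a: "u $ a \<noteq> 0" by (auto simp: vec_eq_iff)
  define c where "c i = complex_of_real (u $ idx (Suc i))" for i
  have ex: "\<exists>k. k \<le> CARD('n) - 1 \<and> c k \<noteq> 0"
  proof (intro exI conjI)
    show "pos idx a - 1 \<le> CARD('n) - 1" by (simp add: diff_le_mono)
    have "Suc (pos idx a - 1) = pos idx a" using pos_ge1'[of a] by linarith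
    then show "c (pos idx a - 1) \<noteq> 0" using a by (simp add: c_def)
  qed
  define Z where "Z = {z. (\<Sum>i\<le>CARD('n) - 1. c i * z ^ i) = 0}"
  have fin: "finite Z" and cZ: "card Z \<le> CARD('n) - 1"
    using polyfun_rootbound[OF ex] unfolding Z_def by auto
  define \<omega> where "\<omega> = cis (pi / real CARD('n))"
  have \<omega>N: "\<omega> ^ CARD('n) = -1" unfolding \<omega>_def Complex.DeMoivre using n2 by simp
  define R where "R = (\<lambda>z. \<omega> * z) ` {z. z ^ CARD('n) = 1}"
  have "R \<subseteq> Z"
  proof
    fix v assume "v \<in> R"
    then obtain z where v: "v = \<omega> * z" "z ^ CARD('n) = 1" unfolding R_def by auto
    then have "v ^ CARD('n) = -1" using \<omega>N by (simp add: power_mult_distrib)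
    then have "phi v u = 0" by (rule z)
    then show "v \<in> Z" unfolding Z_def c_def phi_poly by simp
  qed
  then have "card R \<le> card Z" using fin by (rule card_mono[rotated])
  moreover have "card R = CARD('n)"
  proof -
    have "\<omega> \<noteq> 0" unfolding \<omega>_def by simp
    then have "inj_on (\<lambda>z. \<omega> * z) {z. z ^ CARD('n) = 1}" by (auto intro: inj_onI)
    then have "card R = card {z::complex. z ^ CARD('n) = 1}" unfolding R_def by (rule card_image)
    also have "\<dots> = CARD('n)" using n2 by (intro card_complex_roots_unity) simp
    finally show ?thesis .
  qed
  ultimately show False using cZ n2 by linarith
qed

end

lemma interp:
  fixes k :: nat and idx :: "nat \<Rightarrow> 'n::finite"
  assumes "k \<ge> 1" and "CARD('n) = 2 * k" and "bij_betw idx {1..CARD('n)} (UNIV :: 'n set)"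
  shows "L idx"
  by unfold_locales (use assms in auto)

theorem mainTheorem13:
  fixes k :: nat and idx :: "nat \<Rightarrow> 'n::finite" and f :: "real^'n \<Rightarrow> real^'n" and M :: real
  assumes "k \<ge> 1" and "CARD('n) = 2 * k"
    and "bij_betw idx {1..CARD('n)} (UNIV :: 'n set)"
    and "canalytic_on idx UNIV f"
    and "M > 0" and "\<forall>x. norm (f x) \<le> M"
  shows "\<exists>c. \<forall>x. f x = c"
proof -
  interpret L idx using interp[OF assms(1-3)] .
  have "\<forall>x. \<exists>D. has_cderiv_at idx f D x"
    using assms(4) unfolding canalytic_on_def cdifferentiable_at_def by blast
  then obtain D where cd: "\<And>x. has_cderiv_at idx f (D x) x" by metis
  have fd: "\<And>x. (f has_derivative (\<lambda>h. \<chi> m. \<Sum>i\<in>UNIV. partial i (\<lambda>y. f y $ m) x * h $ i)) (at x)"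
    by (rule f_deriv[OF assms(4)])
  have "f y = f 0" for y
  proof -
    have "f y - f 0 = 0"
    proof (rule phi_all_zero)
      fix w :: complex assume w: "w ^ CARD('n) = -1"
      have "phi w (f y) = phi w (f 0)"
        by (rule const_phi[OF w fd cd]) (use assms(6) in auto)
      then show "phi w (f y - f 0) = 0" by (simp add: phi_diff)
    qed
    then show ?thesis by simp
  qed
  then show ?thesis by blast
qed

end
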